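(* Let $n\ge 2$ and let $T_n$ be the triangular grid graph. Then the boundary cycle of $T_n$ (the cycle formed by the lattice points on the three sides of the big triangle) is a $\lfloor (n-1)/2\rfloor$-supported cycle in $T_n$.
   Context: $T_n$ is the graph whose vertices are the points of the planar triangular lattice (generated by unit vectors at angle $\pi/3$) lying in a closed equilateral triangle of side length $n-1$ whose corners are lattice points (so each side contains $n$ vertices), two vertices being adjacent iff their Euclidean distance is $1$. A cycle $C$ in a graph $G$ is $k$-supported if it can be partitioned into three edge-disjoint paths $I_1,I_2,I_3$, with $I_1\cap I_2$, $I_2\cap I_3$, $I_3\cap I_1$ each a single vertex, such that for all vertices $u_i\in V(I_i)$ ($i=1,2,3$), $\max_{i,j} d_G(u_i,u_j)\ge k$, where $d_G$ is the graph distance. *)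

theory Defs
  imports Complex_Main
begin

definition walk :: "'a set \<Rightarrow> ('a \<Rightarrow> 'a \<Rightarrow> bool) \<Rightarrow> 'a list \<Rightarrow> bool" where
  "walk V E xs \<longleftrightarrow> xs \<noteq> [] \<and> set xs \<subseteq> V \<and>
     (\<forall>i. Suc i < length xs \<longrightarrow> E (xs ! i) (xs ! Suc i))"

definition gdist :: "'a set \<Rightarrow> ('a \<Rightarrow> 'a \<Rightarrow> bool) \<Rightarrow> 'a \<Rightarrow> 'a \<Rightarrow> nat" where
  "gdist V E u v = (LEAST m. \<exists>xs. walk V E xs \<and> hd xs = u \<and> last xs = v \<and> length xs = Suc m)"

definition is_path :: "'a set \<Rightarrow> ('a \<Rightarrow> 'a \<Rightarrow> bool) \<Rightarrow> 'a list \<Rightarrow> bool" where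
  "is_path V E xs \<longleftrightarrow> walk V E xs \<and> distinct xs"

definition path_edges :: "'a list \<Rightarrow> 'a set set" where
  "path_edges xs = {{xs ! i, xs ! Suc i} | i. Suc i < length xs}"

definition is_cycle :: "'a set \<Rightarrow> ('a \<Rightarrow> 'a \<Rightarrow> bool) \<Rightarrow> 'a list \<Rightarrow> bool" where
  "is_cycle V E xs \<longleftrightarrow> 3 \<le> length xs \<and> distinct xs \<and> set xs \<subseteq> V \<and>
     (\<forall>i < length xs. E (xs ! i) (xs ! ((i + 1) mod length xs)))"

definition cycle_edges :: "'a list \<Rightarrow> 'a set set" where
  "cycle_edges xs = {{xs ! i, xs ! ((i + 1) mod length xs)} | i. i < length xs}"

definition k_supported :: "'a set \<Rightarrow> ('a \<Rightarrow> 'a \<Rightarrow> bool) \<Rightarrow> 'a list \<Rightarrow> nat \<Rightarrow> bool" where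
  "k_supported V E C k \<longleftrightarrow> is_cycle V E C \<and>
     (\<exists>I1 I2 I3.
        is_path V E I1 \<and> is_path V E I2 \<and> is_path V E I3 \<and>
        2 \<le> length I1 \<and> 2 \<le> length I2 \<and> 2 \<le> length I3 \<and>
        path_edges I1 \<union> path_edges I2 \<union> path_edges I3 = cycle_edges C \<and>
        path_edges I1 \<inter> path_edges I2 = {} \<and>
        path_edges I2 \<inter> path_edges I3 = {} \<and>
        path_edges I3 \<inter> path_edges I1 = {} \<and>
        (\<exists>v. set I1 \<inter> set I2 = {v}) \<and>
        (\<exists>v. set I2 \<inter> set I3 = {v}) \<and>
        (\<exists>v. set I3 \<inter> set I1 = {v}) \<and>
        (\<forall>u1\<in>set I1. \<forall>u2\<in>set I2. \<forall>u3\<in>set I3.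
           k \<le> max (max (gdist V E u1 u2) (gdist V E u2 u3)) (gdist V E u3 u1)))"

definition lat_pt :: "int \<times> int \<Rightarrow> complex" where
  "lat_pt p = of_int (fst p) + of_int (snd p) * cis (pi / 3)"

text \<open>Lattice points in the closed triangle with corners 0, (n-1), (n-1) cis(pi/3).\<close>
definition tri_V :: "nat \<Rightarrow> (int \<times> int) set" where
  "tri_V n = {(a, b). 0 \<le> a \<and> 0 \<le> b \<and> a + b \<le> int n - 1}"

definition tri_E :: "nat \<Rightarrow> int \<times> int \<Rightarrow> int \<times> int \<Rightarrow> bool" where
  "tri_E n u v \<longleftrightarrow> u \<in> tri_V n \<and> v \<in> tri_V n \<and> dist (lat_pt u) (lat_pt v) = 1"

text \<open>Boundary cycle: the 3(n-1) lattice points on the sides, in cyclic order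
  (0,0),...,(n-2,0),(n-1,0),(n-2,1),...,(1,n-2),(0,n-1),(0,n-2),...,(0,1).\<close>
definition bnd_pt :: "nat \<Rightarrow> nat \<Rightarrow> int \<times> int" where
  "bnd_pt n i =
     (let m = int n - 1; j = int i in
      if j < m then (j, 0)
      else if j < 2 * m then (m - (j - m), j - m)
      else (0, m - (j - 2 * m)))"

definition boundary_cycle :: "nat \<Rightarrow> (int \<times> int) list" where
  "boundary_cycle n = map (bnd_pt n) [0..<3 * (n - 1)]"

end

theory Submission imports Defs begin

lemma lat_dist:
  "dist (lat_pt u) (lat_pt v) =
   sqrt (real_of_int ((fst u - fst v)^2 + (fst u - fst v)*(snd u - snd v) + (snd u - snd v)^2))"
proof -
  define p where "p = fst u - fst v"
  define q where "q = snd u - snd v"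
  have c: "cis (pi/3) = Complex (1/2) (sqrt 3 / 2)"
    by (simp add: cis.ctr cos_60 sin_60)
  have "lat_pt u - lat_pt v = Complex (of_int p + of_int q / 2) (of_int q * sqrt 3 / 2)"
    unfolding lat_pt_def c p_def q_def by (simp add: complex_eq_iff field_simps)
  hence "dist (lat_pt u) (lat_pt v) = sqrt ((of_int p + of_int q / 2)^2 + (of_int q * sqrt 3 / 2)^2)"
    by (simp add: dist_norm cmod_def)
  also have "(of_int p + of_int q / 2)^2 + (of_int q * sqrt 3 / 2)^2 = real_of_int (p^2 + p*q + q^2)"
    by (simp add: power2_eq_square field_simps)
  finally show ?thesis by (simp add: p_def q_def)
qed

lemma int_unit:
  fixes p q :: int
  assumes "p^2 + p*q + q^2 = 1"
  shows "\<bar>p\<bar> \<le> 1 \<and> \<bar>q\<bar> \<le> 1 \<and> \<bar>p + q\<bar> \<le> 1"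
proof -
  have s: "p^2 + q^2 + (p+q)^2 = 2" using assms by (simp add: power2_eq_square algebra_simps)
  have sq: "\<bar>x\<bar> \<le> 1" if "x^2 \<le> 2" for x :: int
  proof (rule ccontr)
    assume "\<not> \<bar>x\<bar> \<le> 1"
    hence "2 \<le> \<bar>x\<bar>" by simp
    hence "2*2 \<le> \<bar>x\<bar> * \<bar>x\<bar>" by (metis mult_mono abs_ge_zero zero_le_numeral order_trans)
    thus False using that by (simp add: power2_eq_square abs_mult[symmetric])
  qed
  show ?thesis using s sq[of p] sq[of q] sq[of "p+q"]
    by (smt (verit) zero_le_power2)
qed

lemma triE_step:
  assumes "tri_E n u v"
  shows "\<bar>fst u - fst v\<bar> \<le> 1 \<and> \<bar>snd u - snd v\<bar> \<le> 1 \<and> \<bar>(fst u + snd u) - (fst v + snd v)\<bar> \<le> 1"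
proof -
  let ?p = "fst u - fst v" and ?q = "snd u - snd v"
  have "sqrt (real_of_int (?p^2 + ?p*?q + ?q^2)) = 1"
    using assms lat_dist[of u v] by (simp add: tri_E_def)
  hence "real_of_int (?p^2 + ?p*?q + ?q^2) = 1"
    by (metis real_sqrt_eq_1_iff)
  hence "?p^2 + ?p*?q + ?q^2 = 1" by linarith
  from int_unit[OF this] show ?thesis by (simp add: algebra_simps)
qed

lemma triE_intro:
  assumes "u \<in> tri_V n" "v \<in> tri_V n"
    "(fst u - fst v, snd u - snd v) \<in> {(1,0),(-1,0),(0,1),(0,-1),(1,-1),(-1,1)}"
  shows "tri_E n u v"
proof -
  have "(fst u - fst v)^2 + (fst u - fst v)*(snd u - snd v) + (snd u - snd v)^2 = 1"
    using assms(3) by auto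
  thus ?thesis using assms lat_dist[of u v] by (simp add: tri_E_def)
qed

lemma triE_sym: "tri_E n u v \<Longrightarrow> tri_E n v u"
  by (auto simp: tri_E_def dist_commute)


lemma bnd1: "i \<le> m \<Longrightarrow> bnd_pt (Suc m) i = (int i, 0)"
  by (auto simp: bnd_pt_def Let_def)
lemma bnd2: "m \<le> i \<Longrightarrow> i \<le> 2*m \<Longrightarrow> bnd_pt (Suc m) i = (int (2*m) - int i, int i - int m)"
  by (auto simp: bnd_pt_def Let_def)
lemma bnd3: "2*m \<le> i \<Longrightarrow> i \<le> 3*m \<Longrightarrow> bnd_pt (Suc m) i = (0, int (3*m) - int i)"
  by (auto simp: bnd_pt_def Let_def)

lemma bnd_cases:
  assumes "i \<le> 3*m"
  obtains "i \<le> m" "bnd_pt (Suc m) i = (int i, 0)"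
  | "m \<le> i" "i \<le> 2*m" "bnd_pt (Suc m) i = (int (2*m) - int i, int i - int m)"
  | "2*m \<le> i" "i \<le> 3*m" "bnd_pt (Suc m) i = (0, int (3*m) - int i)"
  using assms bnd1 bnd2 bnd3 by (metis nat_le_linear)

lemma bnd_V: "i \<le> 3*m \<Longrightarrow> bnd_pt (Suc m) i \<in> tri_V (Suc m)"
  by (erule bnd_cases) (auto simp: tri_V_def)

lemma bnd_edge: "i < 3*m \<Longrightarrow> tri_E (Suc m) (bnd_pt (Suc m) i) (bnd_pt (Suc m) (Suc i))"
  apply (rule triE_intro)
    apply (simp add: bnd_V)
   apply (simp add: bnd_V)
  apply (cases "i < m")
   apply (simp add: bnd1)
  apply (cases "i < 2*m")
   apply (simp add: bnd2)
  apply (simp add: bnd3)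
  done

lemma bnd_inj:
  assumes "bnd_pt (Suc m) i = bnd_pt (Suc m) j" "i \<le> 3*m" "j \<le> 3*m"
  shows "i = j \<or> (i = 0 \<and> j = 3*m) \<or> (i = 3*m \<and> j = 0)"
proof -
  show ?thesis
  proof (rule bnd_cases[OF assms(2)])
    assume a: "bnd_pt (Suc m) i = (int i, 0)" "i \<le> m"
    show ?thesis
      by (rule bnd_cases[OF assms(3)]) (use a assms(1) in auto)
  next
    assume a: "bnd_pt (Suc m) i = (int (2*m) - int i, int i - int m)" "m \<le> i" "i \<le> 2*m"
    show ?thesis
      by (rule bnd_cases[OF assms(3)]) (use a assms(1) in auto)
  next
    assume a: "bnd_pt (Suc m) i = (0, int (3*m) - int i)" "2*m \<le> i" "i \<le> 3*m"
    show ?thesis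
      by (rule bnd_cases[OF assms(3)]) (use a assms(1) in auto)
  qed
qed


abbreviation "B m \<equiv> bnd_pt (Suc m)"
abbreviation "P m a b \<equiv> map (bnd_pt (Suc m)) [a..<Suc b]"

lemma edge_inj:
  assumes "1 \<le> m" "i < 3*m" "j < 3*m" "{B m i, B m (Suc i)} = {B m j, B m (Suc j)}"
  shows "i = j"
proof -
  from assms(4) have "(B m i = B m j \<and> B m (Suc i) = B m (Suc j)) \<or> (B m i = B m (Suc j) \<and> B m (Suc i) = B m j)"
    by (auto simp: doubleton_eq_iff)
  thus ?thesis
  proof
    assume "B m i = B m j \<and> B m (Suc i) = B m (Suc j)"
    hence "i = j \<or> (i = 0 \<and> j = 3*m) \<or> (i = 3*m \<and> j = 0)" using bnd_inj[of m i j] assms by auto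
    thus ?thesis using assms by auto
  next
    assume h: "B m i = B m (Suc j) \<and> B m (Suc i) = B m j"
    have 1: "i = Suc j \<or> (i = 0 \<and> Suc j = 3*m) \<or> (i = 3*m \<and> Suc j = 0)"
      using bnd_inj[of m i "Suc j"] h assms by auto
    have 2: "Suc i = j \<or> (Suc i = 0 \<and> j = 3*m) \<or> (Suc i = 3*m \<and> j = 0)"
      using bnd_inj[of m "Suc i" j] h assms by auto
    show ?thesis using 1 2 assms by arith
  qed
qed

lemma P_nth: "a \<le> b \<Longrightarrow> k \<le> b - a \<Longrightarrow> P m a b ! k = B m (a + k)"
  by (simp add: nth_map_upt del: upt_Suc)

lemma P_len: "length (P m a b) = Suc b - a" by (simp del: upt_Suc)

lemma P_walk:
  assumes "a \<le> b" "b \<le> 3*m"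
  shows "walk (tri_V (Suc m)) (tri_E (Suc m)) (P m a b)"
  unfolding walk_def
proof (intro conjI allI impI)
  show "P m a b \<noteq> []" using assms by simp
  show "set (P m a b) \<subseteq> tri_V (Suc m)" using assms bnd_V by auto
  fix i assume "Suc i < length (P m a b)"
  hence i: "Suc i \<le> b - a" using assms by (simp del: upt_Suc)
  hence "P m a b ! i = B m (a+i)" "P m a b ! Suc i = B m (Suc (a+i))"
    using assms by (simp_all add: P_nth del: upt_Suc)
  thus "tri_E (Suc m) (P m a b ! i) (P m a b ! Suc i)"
    using bnd_edge[of "a+i" m] i assms by simp
qed

lemma P_distinct:
  assumes "a \<le> b" "b \<le> 3*m" "b < 3*m \<or> 0 < a"
  shows "distinct (P m a b)"
proof -
  have "inj_on (B m) {a..<Suc b}"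
  proof (rule inj_onI)
    fix x y assume "x \<in> {a..<Suc b}" "y \<in> {a..<Suc b}" "B m x = B m y"
    thus "x = y" using bnd_inj[of m x y] assms by auto
  qed
  thus ?thesis by (simp add: distinct_map del: upt_Suc)
qed

lemma P_set: "set (P m a b) = B m ` {a..b}"
  by (auto simp: atLeastLessThanSuc_atLeastAtMost)

lemma P_edges:
  assumes "a \<le> b"
  shows "path_edges (P m a b) = {{B m k, B m (Suc k)} | k. a \<le> k \<and> k < b}"
proof -
  have "path_edges (P m a b) = {{B m (a+i), B m (Suc (a+i))} | i. Suc i < Suc b - a}"
    unfolding path_edges_def using assms
    by (intro Collect_cong ex_cong1) (auto simp: P_nth P_len simp del: upt_Suc)
  also have "\<dots> = {{B m k, B m (Suc k)} | k. a \<le> k \<and> k < b}"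
    apply (auto)
    apply (rule_tac x="k-a" in exI, simp)
    done
  finally show ?thesis .
qed

lemma walk_rev:
  assumes "walk V E xs" "\<And>x y. E x y \<Longrightarrow> E y x"
  shows "walk V E (rev xs)"
  unfolding walk_def
proof (intro conjI allI impI)
  show "rev xs \<noteq> []" "set (rev xs) \<subseteq> V" using assms(1) by (auto simp: walk_def)
  fix i assume i: "Suc i < length (rev xs)"
  let ?j = "length xs - Suc (Suc i)"
  have "E (xs ! ?j) (xs ! Suc ?j)" using assms(1) i by (auto simp: walk_def)
  moreover have "rev xs ! i = xs ! Suc ?j" "rev xs ! Suc i = xs ! ?j"
    using i by (auto simp: rev_nth Suc_diff_Suc)
  ultimately show "E (rev xs ! i) (rev xs ! Suc i)" using assms(2) by simp
qed

lemma walk_bound: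
  fixes f :: "'a \<Rightarrow> int"
  assumes "walk V E xs" "\<And>x y. E x y \<Longrightarrow> \<bar>f x - f y\<bar> \<le> 1"
  shows "\<bar>f (hd xs) - f (last xs)\<bar> \<le> int (length xs) - 1"
  using assms(1)
proof (induction xs)
  case Nil thus ?case by (simp add: walk_def)
next
  case (Cons x xs)
  show ?case
  proof (cases "xs = []")
    case True thus ?thesis by simp
  next
    case False
    have w: "walk V E xs" using Cons.prems False unfolding walk_def
    proof (intro conjI allI impI)
      fix i assume "Suc i < length xs"
      thus "E (xs ! i) (xs ! Suc i)" using Cons.prems unfolding walk_def
        by (metis Suc_less_eq length_Cons nth_Cons_Suc)
    qed auto
    have "E x (hd xs)" using Cons.prems False unfolding walk_def
      by (metis hd_conv_nth length_Cons length_greater_0_conv nth_Cons_0 nth_Cons_Suc zero_less_Suc Suc_less_eq)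
    hence "\<bar>f x - f (hd xs)\<bar> \<le> 1" by (rule assms(2))
    with Cons.IH[OF w] False show ?thesis by simp
  qed
qed

lemma gdist_lb:
  fixes f :: "'a \<Rightarrow> int"
  assumes "walk V E ys" "hd ys = u" "last ys = v" "\<And>x y. E x y \<Longrightarrow> \<bar>f x - f y\<bar> \<le> 1"
  shows "\<bar>f u - f v\<bar> \<le> int (gdist V E u v)"
proof -
  let ?Q = "\<lambda>m. \<exists>xs. walk V E xs \<and> hd xs = u \<and> last xs = v \<and> length xs = Suc m"
  have "?Q (length ys - 1)" using assms(1-3)
    by (rule_tac x=ys in exI) (auto simp: walk_def)
  hence "?Q (gdist V E u v)" unfolding gdist_def by (rule LeastI)
  then obtain xs where "walk V E xs" "hd xs = u" "last xs = v" "length xs = Suc (gdist V E u v)" by blast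
  with walk_bound[OF this(1) assms(4)] show ?thesis by simp
qed


lemma P_hd: "a \<le> b \<Longrightarrow> hd (P m a b) = B m a"
  by (simp add: hd_map del: upt_Suc)
lemma P_last: "a \<le> b \<Longrightarrow> last (P m a b) = B m b"
  by simp

lemma max_lemma:
  fixes d1 d2 d3 :: nat and i m :: nat
  assumes "int m - int i \<le> int d1" "int i \<le> int d3"
  shows "m div 2 \<le> max (max d1 d2) d3"
  using assms by linarith

lemma union3:
  fixes f :: "nat \<Rightarrow> 'a"
  shows "{f k | k. 0 \<le> k \<and> k < m} \<union> {f k | k. m \<le> k \<and> k < 2*m} \<union> {f k | k. 2*m \<le> k \<and> k < 3*m}
    = {f k | k. k < 3*m}"
proof (rule set_eqI, rule iffI)
  fix x assume "x \<in> {f k | k. k < 3*m}"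
  then obtain k where k: "x = f k" "k < 3*m" by blast
  show "x \<in> {f k | k. 0 \<le> k \<and> k < m} \<union> {f k | k. m \<le> k \<and> k < 2*m} \<union> {f k | k. 2*m \<le> k \<and> k < 3*m}"
  proof (cases "k < m")
    case True thus ?thesis using k by blast
  next
    case False
    show ?thesis
    proof (cases "k < 2*m")
      case True thus ?thesis using k False by auto
    next
      case F2: False thus ?thesis using k False by auto
    qed
  qed
qed auto

theorem mainTheorem6:
  fixes n :: nat
  assumes "2 \<le> n"
  shows "k_supported (tri_V n) (tri_E n) (boundary_cycle n) ((n - 1) div 2)"
proof -
  define m where "m = n - 1"
  have n: "n = Suc m" and m1: "1 \<le> m" using assms by (auto simp: m_def)
  define C where "C = map (B m) [0..<3*m]"
  have Cdef: "boundary_cycle n = C" by (simp add: boundary_cycle_def C_def n del: upt_Suc)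
  have B0: "B m 0 = B m (3*m)" by (simp add: bnd1 bnd3)
  have Cnth: "C ! i = B m i" if "i < 3*m" for i using that by (simp add: C_def)
  have Cnext: "C ! ((i+1) mod length C) = B m (Suc i)" if "i < 3*m" for i
  proof (cases "Suc i < 3*m")
    case True thus ?thesis by (simp add: C_def)
  next
    case False
    hence "Suc i = 3*m" using that by simp
    thus ?thesis using B0 m1 by (simp add: C_def)
  qed
  have cyc: "is_cycle (tri_V n) (tri_E n) C"
    unfolding is_cycle_def n
  proof (intro conjI allI impI)
    show "3 \<le> length C" using m1 by (simp add: C_def)
    have "inj_on (B m) {0..<3*m}"
    proof (rule inj_onI)
      fix x y assume "x \<in> {0..<3*m}" "y \<in> {0..<3*m}" "B m x = B m y"
      thus "x = y" using bnd_inj[of m x y] by auto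
    qed
    thus "distinct C" by (simp add: C_def distinct_map)
    show "set C \<subseteq> tri_V (Suc m)" using bnd_V by (auto simp: C_def)
    fix i assume "i < length C"
    hence i: "i < 3*m" by (simp add: C_def)
    show "tri_E (Suc m) (C ! i) (C ! ((i + 1) mod length C))"
      using Cnth[OF i] Cnext[OF i] bnd_edge[OF i] by simp
  qed
  have cedges: "cycle_edges C = {{B m k, B m (Suc k)} | k. k < 3*m}"
    unfolding cycle_edges_def
    apply (rule Collect_cong)
    apply (rule ex_cong1)
    using Cnth Cnext by (auto simp: C_def)
  define I1 where "I1 = P m 0 m"
  define I2 where "I2 = P m m (2*m)"
  define I3 where "I3 = P m (2*m) (3*m)"
  have step1: "\<And>x y. tri_E n x y \<Longrightarrow> \<bar>fst x - fst y\<bar> \<le> 1" using triE_step by blast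
  have step2: "\<And>x y. tri_E n x y \<Longrightarrow> \<bar>(\<lambda>p. fst p + snd p) x - (\<lambda>p. fst p + snd p) y\<bar> \<le> 1"
    using triE_step by auto
  have symE: "\<And>x y. tri_E n x y \<Longrightarrow> tri_E n y x" by (rule triE_sym)
  have e1: "path_edges I1 = {{B m k, B m (Suc k)} | k. 0 \<le> k \<and> k < m}" unfolding I1_def by (rule P_edges) simp
  have e2: "path_edges I2 = {{B m k, B m (Suc k)} | k. m \<le> k \<and> k < 2*m}" unfolding I2_def by (rule P_edges) simp
  have e3: "path_edges I3 = {{B m k, B m (Suc k)} | k. 2*m \<le> k \<and> k < 3*m}" unfolding I3_def by (rule P_edges) simp
  have disj: "{{B m k, B m (Suc k)} | k. a \<le> k \<and> k < b} \<inter> {{B m k, B m (Suc k)} | k. c \<le> k \<and> k < d} = {}"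
    if "b \<le> c \<or> d \<le> a" "b \<le> 3*m" "d \<le> 3*m" for a b c d
  proof -
    { fix k k' assume "a \<le> k" "k < b" "c \<le> k'" "k' < d" "{B m k, B m (Suc k)} = {B m k', B m (Suc k')}"
      hence "k = k'" using edge_inj[OF m1, of k k'] that by auto
      hence False using that \<open>a \<le> k\<close> \<open>k < b\<close> \<open>c \<le> k'\<close> \<open>k' < d\<close> by auto }
    thus ?thesis by blast
  qed
  have inter: "B m ` {a..b} \<inter> B m ` {c..d} = {B m b}"
    if "a \<le> b" "b = c" "c \<le> d" "d \<le> 3*m" "0 < a \<or> d < 3*m" for a b c d
  proof -
    { fix i j assume "i \<in> {a..b}" "j \<in> {c..d}" "B m i = B m j"
      hence "i = j" using bnd_inj[of m i j] that by auto
      hence "i = b" using \<open>i \<in> {a..b}\<close> \<open>j \<in> {c..d}\<close> that by auto }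
    note ij = this
    have "x = B m b" if x1: "x \<in> B m ` {a..b}" and x2: "x \<in> B m ` {c..d}" for x
    proof -
      obtain i where "i \<in> {a..b}" "x = B m i" using x1 by blast
      moreover obtain j where "j \<in> {c..d}" "x = B m j" using x2 by blast
      ultimately show ?thesis using ij[of i j] by metis
    qed
    moreover have "B m b \<in> B m ` {a..b}" "B m b \<in> B m ` {c..d}" using that by auto
    ultimately show ?thesis by blast
  qed
  have inter3: "B m ` {2*m..3*m} \<inter> B m ` {0..m} = {B m 0}"
  proof -
    { fix i j assume "i \<in> {2*m..3*m}" "j \<in> {0..m}" "B m i = B m j"
      hence "i = j \<or> (i = 0 \<and> j = 3*m) \<or> (i = 3*m \<and> j = 0)" using bnd_inj[of m i j] by auto
      hence "j = 0" using \<open>i \<in> {2*m..3*m}\<close> \<open>j \<in> {0..m}\<close> m1 by auto }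
    note ij = this
    have "x = B m 0" if x1: "x \<in> B m ` {2*m..3*m}" and x2: "x \<in> B m ` {0..m}" for x
    proof -
      obtain i where "i \<in> {2*m..3*m}" "x = B m i" using x1 by blast
      moreover obtain j where "j \<in> {0..m}" "x = B m j" using x2 by blast
      ultimately show ?thesis using ij[of i j] by metis
    qed
    moreover have "B m 0 \<in> B m ` {0..m}" by simp
    moreover have "B m 0 \<in> B m ` {2*m..3*m}" by (rule image_eqI[where x="3*m" and f="B m", OF B0]) simp
    ultimately show ?thesis by blast
  qed
  have s1: "set I1 = B m ` {0..m}" unfolding I1_def by (rule P_set)
  have s2: "set I2 = B m ` {m..2*m}" unfolding I2_def by (rule P_set)
  have s3: "set I3 = B m ` {2*m..3*m}" unfolding I3_def by (rule P_set)
  have dist: "m div 2 \<le> max (max (gdist (tri_V n) (tri_E n) u1 u2) (gdist (tri_V n) (tri_E n) u2 u3))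
                (gdist (tri_V n) (tri_E n) u3 u1)"
    if h1: "u1 \<in> set I1" and h2: "u2 \<in> set I2" and h3: "u3 \<in> set I3" for u1 u2 u3
  proof -
    obtain i where i: "i \<le> m" "u1 = B m i" using h1 s1 by auto
    obtain j where j: "m \<le> j" "j \<le> 2*m" "u2 = B m j" using h2 s2 by auto
    obtain k where k: "2*m \<le> k" "k \<le> 3*m" "u3 = B m k" using h3 s3 by auto
    have w12: "walk (tri_V n) (tri_E n) (P m i j)" using P_walk[of i j m] i j n by simp
    have "\<bar>(\<lambda>p. fst p + snd p) u1 - (\<lambda>p. fst p + snd p) u2\<bar> \<le> int (gdist (tri_V n) (tri_E n) u1 u2)"
      by (rule gdist_lb[OF w12 _ _ step2]) (use i j P_hd P_last in auto)
    hence d1: "int m - int i \<le> int (gdist (tri_V n) (tri_E n) u1 u2)"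
      using i j by (simp add: bnd1 bnd2)
    have w31: "walk (tri_V n) (tri_E n) (rev (P m i k))"
    proof -
      have "walk (tri_V n) (tri_E n) (P m i k)" using P_walk[of i k m] i k n by simp
      thus ?thesis using walk_rev symE by blast
    qed
    have "\<bar>fst u3 - fst u1\<bar> \<le> int (gdist (tri_V n) (tri_E n) u3 u1)"
      by (rule gdist_lb[OF w31 _ _ step1]) (use i k P_hd[of i k m] P_last[of i k m] in \<open>simp_all add: hd_rev last_rev del: upt_Suc\<close>)
    hence d3: "int i \<le> int (gdist (tri_V n) (tri_E n) u3 u1)"
      using i k by (simp add: bnd1 bnd3)
    show ?thesis by (rule max_lemma[OF d1 d3])
  qed
  show ?thesis
    unfolding k_supported_def Cdef
  proof (intro conjI exI)
    show "is_cycle (tri_V n) (tri_E n) C" by (rule cyc)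
    show "is_path (tri_V n) (tri_E n) I1" unfolding is_path_def I1_def n
      using P_walk[of 0 m m] P_distinct[of 0 m m] m1 by simp
    show "is_path (tri_V n) (tri_E n) I2" unfolding is_path_def I2_def n
      using P_walk[of m "2*m" m] P_distinct[of m "2*m" m] m1 by simp
    show "is_path (tri_V n) (tri_E n) I3" unfolding is_path_def I3_def n
      using P_walk[of "2*m" "3*m" m] P_distinct[of "2*m" "3*m" m] m1 by simp
    show "2 \<le> length I1" "2 \<le> length I2" "2 \<le> length I3"
      unfolding I1_def I2_def I3_def P_len using m1 by auto
    show "path_edges I1 \<union> path_edges I2 \<union> path_edges I3 = cycle_edges C"
      unfolding e1 e2 e3 cedges by (rule union3)
    show "path_edges I1 \<inter> path_edges I2 = {}" unfolding e1 e2 by (rule disj) auto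
    show "path_edges I2 \<inter> path_edges I3 = {}" unfolding e2 e3 by (rule disj) auto
    show "path_edges I3 \<inter> path_edges I1 = {}" unfolding e3 e1 by (rule disj) auto
    show "set I1 \<inter> set I2 = {B m m}" unfolding s1 s2 by (rule inter) (use m1 in auto)
    show "set I2 \<inter> set I3 = {B m (2*m)}" unfolding s2 s3 by (rule inter) (use m1 in auto)
    show "set I3 \<inter> set I1 = {B m 0}" unfolding s3 s1 by (rule inter3)
    show "\<forall>u1\<in>set I1. \<forall>u2\<in>set I2. \<forall>u3\<in>set I3.
           (n - 1) div 2 \<le> max (max (gdist (tri_V n) (tri_E n) u1 u2) (gdist (tri_V n) (tri_E n) u2 u3))
                (gdist (tri_V n) (tri_E n) u3 u1)"
      using dist by (simp add: m_def)
  qed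
qed

end
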